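(* Fix $i\in\{1,\ldots,N\}$, a DFA mode $q$ and an atomic-proposition formula $\alpha^i$. Suppose $\hat{\mathbf{M}}^i\preceq^{\delta^i}_0\mathbf{M}^i$ with relation $\mathscr{R}^i$, interface $\mathcal U_i$ and lifted kernel $\mathbb{W}_{\mathbb{T}^i}$, and let $\pi^i_q:\hat{\mathbb{X}}_i\to\hat{\mathbb{U}}_i$ be given. Let $v^{(i)}(\cdot,\cdot,q):\hat{\mathbb{X}}_i\times\mathbb{X}_i\to[0,1]$ and $v^{(i)}(\cdot,q):\hat{\mathbb{X}}_i\to[0,1]$ satisfy $v^{(i)}(\hat x_i,x_i,q)\ge v^{(i)}(\hat x_i,q)$ for all $(\hat x_i,x_i)\in\mathscr{R}^i$. Then for all $(\hat x_i,x_i)\in\mathscr{R}^i$, $$\mathbf{T}^{\pi^i_q}_{\alpha^i}(v^{(i)})(\hat x_i,x_i,q)\;\ge\;\mathbf{T}^{\pi^i_q}_{\delta^i,\alpha^i}(v^{(i)})(\hat x_i,q).$$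
   Context: Agent $\mathbf{M}^i=(\mathbb{X}_i,\mathbb{U}_i,\mathbb{Y}_i,\mathbb{T}_i,x_{i,0},h_i)$ and its abstraction $\hat{\mathbf{M}}^i=(\hat{\mathbb{X}}_i,\hat{\mathbb{U}}_i,\hat{\mathbb{Y}}_i,\hat{\mathbb{T}}_i,\hat x_{i,0},\hat h_i)$ are general Markov decision processes: Polish state and input spaces, a metric output space, a stochastic kernel $\mathbb{T}(\cdot\mid x,u)$, an initial state and a measurable output map. $\hat{\mathbf{M}}^i\preceq^{\delta}_{\epsilon}\mathbf{M}^i$ means that there exist: - a measurable relation $\mathscr{R}^i\subset\hat{\mathbb{X}}_i\times\mathbb{X}_i$; - an interface $\mathcal U_i:\hat{\mathbb{U}}_i\times\hat{\mathbb{X}}_i\times\mathbb{X}_i\to\mathcal{P}(\mathbb{U}_i)$; - a kernel $\mathbb{W}_{\mathbb{T}^i}(\cdot\mid\hat u,\hat x,x)$ on $\hat{\mathbb{X}}_i\times\mathbb{X}_i$; such that: - $(\hat x_{i,0},x_{i,0})\in\mathscr{R}^i$; - $d_{\mathbb{Y}_i}(\hat h_i(\hat x),h_i(x))\le\epsilon$ on $\mathscr{R}^i$; - for every $\hat u$ and every $(\hat x,x)\in\mathscr{R}^i$, $\mathbb{W}_{\mathbb{T}^i}(\cdot\mid\hat u,\hat x,x)$ has first marginal $\hat{\mathbb{T}}_i(\cdot\mid\hat x,\hat u)$, has second marginal $\mathbb{T}_i(\cdot\mid x,\mathcal U_i(\hat u,\hat x,x))$, and satisfies $\mathbb{W}_{\mathbb{T}^i}(\mathscr{R}^i\mid\hat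 u,\hat x,x)\ge1-\delta$. $\alpha^i$ is a conjunction of (possibly negated) atomic propositions from $\mathrm{AP}_i$. With labelling map $L^i:\mathbb{Y}_i\to2^{\mathrm{AP}_i}$, the indicator $\mathcal L_{\alpha^i}(\hat x_i)$ equals $1$ if $L^i(\hat h_i(\hat x_i))\models\alpha^i$ and $0$ otherwise. Coupled operator: $$\mathbf{T}^{\pi^i_q}_{\alpha^i}(v^{(i)})(\hat x_i,x_i,q)=\int\mathcal L_{\alpha^i}(\hat x_i')\,v^{(i)}(\hat x_i',x_i',q)\,\mathbb{W}_{\mathbb{T}^i}\big(d\hat x_i'\times dx_i'\mid\pi^i_q(\hat x_i),\hat x_i,x_i\big).$$ Abstract operator: $$\mathbf{T}^{\pi^i_q}_{\alpha^i}(v^{(i)})(\hat x_i,q)=\mathbb{E}\big[\mathcal L_{\alpha^i}(\hat x_i')v^{(i)}(\hat x_i',q)\big],\qquad \hat x_i'\sim\hat{\mathbb{T}}_i(\cdot\mid\hat x_i,\pi^i_q(\hat x_i)).$$ Robust operator: $$\mathbf{T}^{\pi^i_q}_{\delta^i,\alpha^i}(v^{(i)})(\hat x_i,q)=\mathbf L\big(\mathbf{T}^{\pi^i_q}_{\alpha^i}(v^{(i)})(\hat x_i,q)-\delta^i\big),$$ where $\mathbf L(a)=\min\{1,\max\{0,a\}\}$ is truncation to $[0,1]$. *)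

theory Defs
  imports "HOL-Probability.Probability"
begin

definition trunc01 :: "real \<Rightarrow> real" where
  "trunc01 a = min 1 (max 0 a)"

text \<open>A conjunction of (possibly negated) atomic propositions is given by the set
  of positive atoms and the set of negated atoms; a label set satisfies it iff it contains
  all positive and none of the negated atoms.\<close>
definition sat_conj :: "'ap set \<Rightarrow> 'ap set \<Rightarrow> 'ap set \<Rightarrow> bool" where
  "sat_conj pos neg S \<longleftrightarrow> pos \<subseteq> S \<and> neg \<inter> S = {}"

definition label_ind :: "('y \<Rightarrow> 'ap set) \<Rightarrow> ('a \<Rightarrow> 'y) \<Rightarrow> 'ap set \<Rightarrow> 'ap set \<Rightarrow> 'a \<Rightarrow> real" where
  "label_ind L hh pos neg xh = (if sat_conj pos neg (L (hh xh)) then 1 else 0)"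

definition stoch_kernel :: "('c::topological_space \<Rightarrow> 'd::topological_space measure) \<Rightarrow> bool" where
  "stoch_kernel K \<longleftrightarrow> (\<forall>c. prob_space (K c) \<and> sets (K c) = sets borel)
      \<and> K \<in> borel \<rightarrow>\<^sub>M subprob_algebra borel"

definition gmdp :: "('x::polish_space \<Rightarrow> 'u::polish_space \<Rightarrow> 'x measure) \<Rightarrow> ('x \<Rightarrow> 'y::metric_space) \<Rightarrow> bool" where
  "gmdp T h \<longleftrightarrow> stoch_kernel (\<lambda>(x,u). T x u) \<and> h \<in> borel_measurable borel"

text \<open>Approximate probabilistic relation  Mhat  \<preceq>^delta_eps  M  witnessed by
  relation R, interface Ui and lifted kernel W.\<close>
definition sim_rel ::
  "('a::polish_space \<Rightarrow> 'u::polish_space \<Rightarrow> 'a measure) \<Rightarrow> 'a \<Rightarrow> ('a \<Rightarrow> 'y::metric_space)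
   \<Rightarrow> ('b::polish_space \<Rightarrow> 'v::polish_space \<Rightarrow> 'b measure) \<Rightarrow> 'b \<Rightarrow> ('b \<Rightarrow> 'y)
   \<Rightarrow> real \<Rightarrow> real
   \<Rightarrow> ('a \<times> 'b) set \<Rightarrow> ('u \<Rightarrow> 'a \<Rightarrow> 'b \<Rightarrow> 'v measure) \<Rightarrow> ('u \<Rightarrow> 'a \<Rightarrow> 'b \<Rightarrow> ('a \<times> 'b) measure)
   \<Rightarrow> bool" where
  "sim_rel That xh0 hh T x0 h eps delta R Ui W \<longleftrightarrow>
     gmdp That hh \<and> gmdp T h \<and>
     R \<in> sets (borel \<Otimes>\<^sub>M borel) \<and>
     stoch_kernel (\<lambda>(uh, xh, x). Ui uh xh x) \<and>
     stoch_kernel (\<lambda>(uh, xh, x). W uh xh x) \<and>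
     (xh0, x0) \<in> R \<and>
     (\<forall>(xh, x) \<in> R. dist (hh xh) (h x) \<le> eps) \<and>
     (\<forall>uh. \<forall>(xh, x) \<in> R.
        distr (W uh xh x) borel fst = That xh uh \<and>
        distr (W uh xh x) borel snd = (Ui uh xh x \<bind> (\<lambda>u. T x u)) \<and>
        measure (W uh xh x) R \<ge> 1 - delta)"

definition T_coupled ::
  "('u \<Rightarrow> 'a \<Rightarrow> 'b \<Rightarrow> ('a \<times> 'b) measure) \<Rightarrow> ('a \<Rightarrow> real) \<Rightarrow> ('q \<Rightarrow> 'a \<Rightarrow> 'u)
   \<Rightarrow> ('a \<Rightarrow> 'b \<Rightarrow> 'q \<Rightarrow> real) \<Rightarrow> 'a \<Rightarrow> 'b \<Rightarrow> 'q \<Rightarrow> real" where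
  "T_coupled W La pol v xh x q =
     (\<integral>p. La (fst p) * v (fst p) (snd p) q \<partial>(W (pol q xh) xh x))"

definition T_abs ::
  "('a \<Rightarrow> 'u \<Rightarrow> 'a measure) \<Rightarrow> ('a \<Rightarrow> real) \<Rightarrow> ('q \<Rightarrow> 'a \<Rightarrow> 'u)
   \<Rightarrow> ('a \<Rightarrow> 'q \<Rightarrow> real) \<Rightarrow> 'a \<Rightarrow> 'q \<Rightarrow> real" where
  "T_abs That La pol v xh q = (\<integral>xh'. La xh' * v xh' q \<partial>(That xh (pol q xh)))"

definition T_robust ::
  "('a \<Rightarrow> 'u \<Rightarrow> 'a measure) \<Rightarrow> real \<Rightarrow> ('a \<Rightarrow> real) \<Rightarrow> ('q \<Rightarrow> 'a \<Rightarrow> 'u)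
   \<Rightarrow> ('a \<Rightarrow> 'q \<Rightarrow> real) \<Rightarrow> 'a \<Rightarrow> 'q \<Rightarrow> real" where
  "T_robust That delta La pol v xh q = trunc01 (T_abs That La pol v xh q - delta)"

end

theory Submission
  imports Defs
begin

theorem lemma1:
  fixes That :: "'a::polish_space \<Rightarrow> 'u::polish_space \<Rightarrow> 'a measure"
    and T :: "'b::polish_space \<Rightarrow> 'v::polish_space \<Rightarrow> 'b measure"
    and hh :: "'a \<Rightarrow> 'y::metric_space" and h :: "'b \<Rightarrow> 'y"
    and xh0 :: 'a and x0 :: 'b
    and R :: "('a \<times> 'b) set"
    and Ui :: "'u \<Rightarrow> 'a \<Rightarrow> 'b \<Rightarrow> 'v measure"
    and W :: "'u \<Rightarrow> 'a \<Rightarrow> 'b \<Rightarrow> ('a \<times> 'b) measure"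
    and delta :: real
    and L :: "'y \<Rightarrow> 'ap set" and pos neg :: "'ap set"
    and pol :: "'q \<Rightarrow> 'a \<Rightarrow> 'u" and q :: 'q
    and v3 :: "'a \<Rightarrow> 'b \<Rightarrow> 'q \<Rightarrow> real" and v2 :: "'a \<Rightarrow> 'q \<Rightarrow> real"
  assumes sim: "sim_rel That xh0 hh T x0 h 0 delta R Ui W"
    and L_meas: "{y. sat_conj pos neg (L y)} \<in> sets borel"
    and pi_meas: "pol q \<in> borel_measurable borel"
    and v3_range: "\<And>xh x. 0 \<le> v3 xh x q \<and> v3 xh x q \<le> 1"
    and v3_meas: "(\<lambda>p. v3 (fst p) (snd p) q) \<in> borel_measurable (borel \<Otimes>\<^sub>M borel)"
    and v2_range: "\<And>xh. 0 \<le> v2 xh q \<and> v2 xh q \<le> 1"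
    and v2_meas: "(\<lambda>xh. v2 xh q) \<in> borel_measurable borel"
    and dom: "\<And>xh x. (xh, x) \<in> R \<Longrightarrow> v3 xh x q \<ge> v2 xh q"
  shows "\<forall>(xh, x) \<in> R.
           T_coupled W (label_ind L hh pos neg) pol v3 xh x q
             \<ge> T_robust That delta (label_ind L hh pos neg) pol v2 xh q"
proof (intro ballI, clarify)
  fix xh x assume xR: "(xh, x) \<in> R"
  define La where "La = label_ind L hh pos neg"
  define M where "M = W (pol q xh) xh x"
  have simd: "gmdp That hh" "R \<in> sets (borel \<Otimes>\<^sub>M borel)"
    "stoch_kernel (\<lambda>(uh, xh, x). W uh xh x)"
    "distr M borel fst = That xh (pol q xh)" "measure M R \<ge> 1 - delta"
    using sim xR unfolding sim_rel_def M_def by auto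
  have hh_meas: "hh \<in> borel_measurable borel" using simd(1) unfolding gmdp_def by auto
  have ps: "prob_space M" and sM: "sets M = sets (borel \<Otimes>\<^sub>M borel)"
  proof -
    have "prob_space M \<and> sets M = sets borel"
      using simd(3) unfolding stoch_kernel_def M_def by auto
    then show "prob_space M" "sets M = sets (borel \<Otimes>\<^sub>M borel)"
      by (auto simp only: borel_prod)
  qed
  interpret prob_space M by (rule ps)
  have La_meas: "La \<in> borel_measurable borel"
  proof -
    have "La = indicator (hh -` {y. sat_conj pos neg (L y)})"
      unfolding La_def label_ind_def by (auto simp: indicator_def fun_eq_iff)
    moreover have "hh -` {y. sat_conj pos neg (L y)} \<in> sets borel"
      using measurable_sets[OF hh_meas L_meas] by simp
    ultimately show ?thesis by simp
  qed
  have La01: "\<And>z. 0 \<le> La z \<and> La z \<le> 1" unfolding La_def label_ind_def by auto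
  have fstM: "fst \<in> measurable M borel"
    using measurable_cong_sets[OF sM refl] measurable_fst by (metis borel_prod)
  define f where "f = (\<lambda>p. La (fst p) * v3 (fst p) (snd p) q)"
  define g where "g = (\<lambda>p::'a\<times>'b. La (fst p) * v2 (fst p) q)"
  have fm: "f \<in> borel_measurable M"
    unfolding f_def measurable_cong_sets[OF sM refl]
    using La_meas v3_meas by (intro borel_measurable_times measurable_compose[OF measurable_fst]) auto
  have gm: "g \<in> borel_measurable M"
    unfolding g_def using fstM La_meas v2_meas
    by (intro borel_measurable_times measurable_compose[OF fstM]) auto
  have RM: "R \<in> sets M" using sM simd(2) by simp
  have fi: "integrable M f"
    by (rule integrable_const_bound[where B=1]) (use fm La01 v3_range in \<open>auto simp: f_def intro!: mult_le_one\<close>)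
  have gi: "integrable M g"
    by (rule integrable_const_bound[where B=1]) (use gm La01 v2_range in \<open>auto simp: g_def intro!: mult_le_one\<close>)
  have ii: "integrable M (indicator (space M - R) :: _ \<Rightarrow> real)"
    using RM by (intro integrable_const_bound[where B=1]) auto
  have pw: "g p - indicator (space M - R) p \<le> f p" if "p \<in> space M" for p
  proof (cases "p \<in> R")
    case True
    then show ?thesis using dom[of "fst p" "snd p"] La01[of "fst p"]
      by (auto simp: f_def g_def intro: mult_left_mono)
  next
    case False
    have "g p \<le> 1" using La01 v2_range by (auto simp: g_def intro: mult_le_one)
    moreover have "0 \<le> f p" using La01 v3_range by (auto simp: f_def)
    ultimately show ?thesis using False that by auto
  qed
  have "integral\<^sup>L M g - measure M (space M - R) = integral\<^sup>L M (\<lambda>p. g p - indicator (space M - R) p)"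
    using gi ii RM by (simp add: Bochner_Integration.integral_diff)
  also have "\<dots> \<le> integral\<^sup>L M f"
    using pw gi ii fi by (intro integral_mono) auto
  finally have A: "integral\<^sup>L M g - measure M (space M - R) \<le> integral\<^sup>L M f" .
  have B: "measure M (space M - R) = 1 - measure M R" using RM prob_compl by simp
  have C: "integral\<^sup>L M g = T_abs That La pol v2 xh q"
  proof -
    have "T_abs That La pol v2 xh q = integral\<^sup>L (distr M borel fst) (\<lambda>z. La z * v2 z q)"
      unfolding T_abs_def simd(4) ..
    also have "\<dots> = integral\<^sup>L M (\<lambda>p. La (fst p) * v2 (fst p) q)"
      using fstM La_meas v2_meas by (subst integral_distr) auto
    finally show ?thesis unfolding g_def by simp
  qed
  have D: "T_coupled W La pol v3 xh x q = integral\<^sup>L M f"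
    unfolding T_coupled_def f_def M_def ..
  have E: "0 \<le> integral\<^sup>L M f"
    using La01 v3_range by (auto simp: f_def intro!: integral_nonneg)
  show "T_robust That delta La pol v2 xh q \<le> T_coupled W La pol v3 xh x q"
    unfolding T_robust_def trunc01_def D using A B C E simd(5) by linarith
qed

end
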